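(* Let $q$ be a prime power and $k\ge3$, $u$, $h\ge1$ integers with $q\ge u\ge 2$. Let $U_1,\dots,U_h$ be $u$-dimensional subspaces of $\mathbf F_q^k$ with $U_i\cap U_j=\{0\}$ for $i\ne j$, and assume $q^k-q^{k-1}>h(q^u-1)$. Let $U$ be the set of nonzero vectors of $\mathbf F_q^k$ not in $U_1\cup\dots\cup U_h$, let $\widetilde G$ be a matrix whose columns consist of exactly one representative of each class $\{\lambda\mathbf v:\lambda\in\mathbf F_q^*\}$, $\mathbf v\in U$, and let $\mathbf C$ be the linear code with generator matrix $\widetilde G$, with parameters $\big[\frac{(q^k-1)-h(q^u-1)}{q-1},k,d=q^{k-1}-hq^{u-1}\big]_q$. If $h\le uq$, then $\mathbf C$ is distance optimal. In particular, if $u=2$ and $h\le 2q$, then $\mathbf C$ is distance optimal.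
   Context: A linear $[n,k,d]_q$ code is distance optimal if no linear $[n,k,d+1]_q$ code exists. *)

theory Defs
  imports "HOL-Analysis.Analysis"
begin

text \<open>Codes of length n over a finite field 'a are subsets of 'a ^ 'm with CARD('m) = n.\<close>

definition hamming_dist :: "'a ^ 'm \<Rightarrow> 'a ^ 'm \<Rightarrow> nat" where
  "hamming_dist x y = card {i. x $ i \<noteq> y $ i}"

definition min_dist :: "('a ^ 'm) set \<Rightarrow> nat" where
  "min_dist C = Min {hamming_dist x y | x y. x \<in> C \<and> y \<in> C \<and> x \<noteq> y}"

definition linear_code :: "nat \<Rightarrow> nat \<Rightarrow> ('a::field ^ 'm) set \<Rightarrow> bool" where
  "linear_code k d C \<longleftrightarrow> vec.subspace C \<and> vec.dim C = k \<and> min_dist C = d"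

definition distance_optimal :: "('a::field ^ 'm) set \<Rightarrow> bool" where
  "distance_optimal C \<longleftrightarrow>
     \<not> (\<exists>C' :: ('a ^ 'm) set. linear_code (vec.dim C) (min_dist C + 1) C')"

text \<open>Linear code generated by a k x n matrix (rows indexed by 'n, columns by 'm).\<close>
definition gen_code :: "'a::field ^ 'm ^ 'n \<Rightarrow> ('a ^ 'm) set" where
  "gen_code G = {x v* G | x. True}"

end

theory Submission
  imports Defs
begin


lemma card_subspace:
  fixes V :: "('a::{finite,field} ^ 'n) set"
  assumes "vec.subspace V"
  shows "card V = CARD('a) ^ vec.dim V"
proof -
  obtain B where B: "B \<subseteq> V" "vec.independent B" "V \<subseteq> vec.span B" "card B = vec.dim V"
    using vec.basis_exists by blast
  have fB: "finite B" by simp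
  have VB: "V = vec.span B"
    using B assms vec.span_minimal by blast
  define F where "F = (\<lambda>g::_ \<Rightarrow> 'a. \<Sum>v\<in>B. g v *s v)"
  have "bij_betw F (PiE B (\<lambda>_. UNIV)) V"
  proof (rule bij_betwI')
    fix g g' :: "_ \<Rightarrow> 'a" assume g: "g \<in> PiE B (\<lambda>_. UNIV)" and g': "g' \<in> PiE B (\<lambda>_. UNIV)"
    show "(F g = F g') = (g = g')"
    proof
      assume "F g = F g'"
      then have "(\<Sum>v\<in>B. (g v - g' v) *s v) = 0"
        unfolding F_def by (simp add: vector_sub_rdistrib sum_subtractf)
      then have "\<forall>v\<in>B. g v - g' v = 0"
      proof -
        from B(2) have "\<forall>c. (\<Sum>v\<in>B. c v *s v) = 0 \<longrightarrow> (\<forall>v\<in>B. c v = 0)"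
          unfolding vec.independent_explicit by blast
        from spec[OF this, of "\<lambda>v. g v - g' v"] show ?thesis using \<open>(\<Sum>v\<in>B. (g v - g' v) *s v) = 0\<close> by blast
      qed
      then show "g = g'" using g g' by (auto intro!: extensionalityI[of _ B] simp: PiE_def)
    qed simp
  next
    fix g :: "_ \<Rightarrow> 'a" assume "g \<in> PiE B (\<lambda>_. UNIV)"
    show "F g \<in> V" unfolding VB F_def using vec.span_finite[OF fB] by auto
  next
    fix y assume "y \<in> V"
    then obtain u where u: "y = (\<Sum>v\<in>B. u v *s v)" unfolding VB using vec.span_finite[OF fB] by auto
    show "\<exists>g\<in>PiE B (\<lambda>_. UNIV). y = F g"
      by (rule bexI[of _ "restrict u B"]) (auto simp: u F_def)
  qed
  then have "card V = card (PiE B (\<lambda>_. UNIV :: 'a set))" by (simp add: bij_betw_same_card)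
  also have "\<dots> = CARD('a) ^ card B" by (simp add: card_PiE)
  finally show ?thesis using B by simp
qed


definition wt :: "'a::zero ^ 'm \<Rightarrow> nat" where "wt x = card {i. x $ i \<noteq> 0}"
definition cdiv :: "nat \<Rightarrow> nat \<Rightarrow> nat" where "cdiv d q = (d + q - 1) div q"

lemma cdiv_cdiv: "a > 0 \<Longrightarrow> b > 0 \<Longrightarrow> cdiv (cdiv d a) b = cdiv d (a * b)"
proof -
  assume a: "a > 0" and b: "b > 0"
  obtain a' b' where ab: "a = Suc a'" "b = Suc b'" using a b gr0_conv_Suc by blast
  have "(d + a') div (Suc a') + b' = (d + a' + Suc a' * b') div Suc a'"
    by (metis add.commute div_mult_self2 nat.distinct(1) mult.commute)
  also have "\<dots> div Suc b' = (d + a' + Suc a' * b') div (Suc a' * Suc b')"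
    by (rule div_mult2_eq[symmetric])
  finally have *: "((d + a') div (Suc a') + b') div Suc b' = (d + a' + Suc a' * b') div (Suc a' * Suc b')" .
  have **: "d + Suc a' * Suc b' - 1 = d + a' + Suc a' * b'" by simp
  show ?thesis unfolding cdiv_def ab using * ** by (simp add: add.assoc)
qed

lemma cdiv_le: "q > 0 \<Longrightarrow> d \<le> q * m \<Longrightarrow> cdiv d q \<le> m"
proof -
  assume q: "q > 0" and d: "d \<le> q * m"
  have "d + q - 1 < (m + 1) * q" using q d by (simp add: algebra_simps)
  then have "(d + q - 1) div q < m + 1" using q by (simp add: div_less_iff_less_mult)
  then show ?thesis unfolding cdiv_def by simp
qed

lemma cdiv_1[simp]: "cdiv d 1 = d" "cdiv d (Suc 0) = d" by (simp_all add: cdiv_def)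

lemma key_avg:
  fixes C :: "('a::{finite,field} ^ 'm) set" and c x :: "'a ^ 'm"
  assumes sub: "vec.subspace C" and cC: "c \<in> C"
    and minw: "\<And>y. y \<in> C \<Longrightarrow> y \<noteq> 0 \<Longrightarrow> wt c \<le> wt y"
    and xC: "x \<in> C" and nm: "\<And>\<alpha>. x \<noteq> \<alpha> *s c"
  shows "wt c \<le> CARD('a) * wt (\<chi> i. if c $ i \<noteq> 0 then 0 else x $ i)"
proof -
  define T where "T = {i. c $ i \<noteq> 0}"
  define w where "w = wt c"
  have wT: "w = card T" unfolding w_def wt_def T_def ..
  define px where "px = (\<chi> i. if c $ i \<noteq> 0 then 0 else x $ i)"
  define A where "A = (\<lambda>\<alpha>::'a. card {i\<in>T. x $ i \<noteq> \<alpha> * c $ i})"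
  have wpx: "wt px = card {i. i \<notin> T \<and> x $ i \<noteq> 0}"
    unfolding wt_def px_def T_def by (rule arg_cong[where f=card]) auto
  have each: "w \<le> A \<alpha> + wt px" for \<alpha>
  proof -
    have "x - \<alpha> *s c \<in> C" using sub cC xC by (simp add: vec.subspace_diff vec.subspace_scale)
    moreover have "x - \<alpha> *s c \<noteq> 0" using nm[of \<alpha>] by simp
    ultimately have "w \<le> wt (x - \<alpha> *s c)" using minw w_def by blast
    also have "{i. (x - \<alpha> *s c) $ i \<noteq> 0} = {i\<in>T. x $ i \<noteq> \<alpha> * c $ i} \<union> {i. i \<notin> T \<and> x $ i \<noteq> 0}"
      unfolding T_def by auto
    then have "wt (x - \<alpha> *s c) = A \<alpha> + wt px"
      unfolding wt_def[of "x - \<alpha> *s c"] wpx A_def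
      by (simp add: card_Un_disjoint disjoint_iff)
    finally show ?thesis .
  qed
  have "(\<Sum>\<alpha>\<in>UNIV. A \<alpha>) = (\<Sum>\<alpha>\<in>UNIV. \<Sum>i\<in>T. (if x $ i \<noteq> \<alpha> * c $ i then 1 else 0::nat))"
    unfolding A_def card_eq_sum by (simp only: sum.inter_filter[OF finite])
  also have "\<dots> = (\<Sum>i\<in>T. \<Sum>\<alpha>\<in>UNIV. (if x $ i \<noteq> \<alpha> * c $ i then 1 else 0::nat))"
    by (rule sum.swap)
  also have "\<dots> = (\<Sum>i\<in>T. CARD('a) - 1)"
  proof (rule sum.cong[OF refl])
    fix i assume "i \<in> T"
    then have ci: "c $ i \<noteq> 0" unfolding T_def by simp
    have "{\<alpha>. x $ i \<noteq> \<alpha> * c $ i} = UNIV - {x $ i / c $ i}"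
      using ci by (auto simp: field_simps)
    then show "(\<Sum>\<alpha>\<in>UNIV. (if x $ i \<noteq> \<alpha> * c $ i then 1 else 0::nat)) = CARD('a) - 1"
      by (simp add: sum.If_cases card_Diff_singleton)
  qed
  also have "\<dots> = w * (CARD('a) - 1)" using wT by simp
  finally have sA: "(\<Sum>\<alpha>\<in>UNIV. A \<alpha>) = w * (CARD('a) - 1)" .
  have "CARD('a) * w = (\<Sum>\<alpha>\<in>(UNIV::'a set). w)" by simp
  also have "\<dots> \<le> (\<Sum>\<alpha>\<in>UNIV. A \<alpha> + wt px)" by (rule sum_mono) (rule each)
  also have "\<dots> = w * (CARD('a) - 1) + CARD('a) * wt px" by (simp add: sum.distrib sA)
  finally have "CARD('a) * w \<le> w * (CARD('a) - 1) + CARD('a) * wt px" .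
  moreover have "CARD('a) \<ge> 1" by (simp add: Suc_leI)
  moreover have "w * (CARD('a) - 1) + w = CARD('a) * w"
    using \<open>CARD('a) \<ge> 1\<close> by (cases "CARD('a)") auto
  ultimately have "w \<le> CARD('a) * wt px"
    by linarith
  then show ?thesis unfolding w_def px_def .
qed



lemma griesmer_step:
  fixes C :: "('a::{finite,field} ^ 'm) set"
  assumes sub: "vec.subspace C" and cardC: "card C > 1"
    and supp: "\<forall>x\<in>C. \<forall>i. i \<notin> S \<longrightarrow> x $ i = 0" and wts: "\<forall>x\<in>C. x \<noteq> 0 \<longrightarrow> d \<le> wt x"
  shows "\<exists>T (C' :: ('a ^ 'm) set). T \<subseteq> S \<and> d \<le> card T \<and> vec.subspace C' \<and> card C = CARD('a) * card C' \<and>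
      (\<forall>x\<in>C'. \<forall>i. i \<notin> S - T \<longrightarrow> x $ i = 0) \<and> (\<forall>x\<in>C'. x \<noteq> 0 \<longrightarrow> cdiv d CARD('a) \<le> wt x)"
proof -
  have "C - {0} \<noteq> {}"
  proof
    assume "C - {0} = {}" then have "C \<subseteq> {0}" by blast
    then have "card C \<le> 1" using card_mono[of "{0}" C] by simp
    then show False using cardC by simp
  qed
  then have ne: "wt ` (C - {0}) \<noteq> {}" by simp
  have "Min (wt ` (C - {0})) \<in> wt ` (C - {0})" by (rule Min_in[OF _ ne]) simp
  then obtain c where c: "c \<in> C - {0}" "wt c = Min (wt ` (C - {0}))" by (metis imageE)
  then have c: "c \<in> C" "c \<noteq> 0" "wt c = Min (wt ` (C - {0}))" by auto
  have minw: "\<And>y. y \<in> C \<Longrightarrow> y \<noteq> 0 \<Longrightarrow> wt c \<le> wt y" using c(3) by simp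
  define T where "T = {i. c $ i \<noteq> 0}"
  define p where "p = (\<lambda>x::'a^'m. (\<chi> i. if c $ i \<noteq> 0 then 0 else x $ i))"
  have K: "\<And>x. x \<in> C \<Longrightarrow> (\<And>\<alpha>. x \<noteq> \<alpha> *s c) \<Longrightarrow> wt c \<le> CARD('a) * wt (p x)"
    unfolding p_def by (rule key_avg[OF sub c(1) minw]) auto
  have wc: "wt c = card T" unfolding wt_def T_def ..
  have wpos: "wt c > 0"
  proof -
    from c(2) obtain i where "c $ i \<noteq> 0" by (metis vec_eq_iff zero_index)
    then have "T \<noteq> {}" unfolding T_def by auto
    then show ?thesis using wc by (simp add: card_gt_0_iff)
  qed
  have TS: "T \<subseteq> S" using supp c(1) unfolding T_def by blast
  have dT: "d \<le> card T" using wts c(1,2) wc by metis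
  have padd: "p (x + y) = p x + p y" for x y unfolding p_def by (simp add: vec_eq_iff)
  have psc: "p (a *s x) = a *s p x" for a x unfolding p_def by (simp add: vec_eq_iff)
  have pdiff: "p (x - y) = p x - p y" for x y unfolding p_def by (simp add: vec_eq_iff)
  have pc: "p c = 0" unfolding p_def by (simp add: vec_eq_iff)
  have sub': "vec.subspace (p ` C)"
    unfolding vec.subspace_def
  proof (intro conjI ballI allI)
    show "0 \<in> p ` C" using vec.subspace_0[OF sub] pc
      by (metis image_eqI psc vector_smult_lzero)
  next
    fix a b assume "a \<in> p ` C" "b \<in> p ` C"
    then obtain x y where "x \<in> C" "y \<in> C" "a = p x" "b = p y" by auto
    then show "a + b \<in> p ` C" using vec.subspace_add[OF sub] padd by (metis image_eqI)
  next
    fix r a assume "a \<in> p ` C"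
    then obtain x where "x \<in> C" "a = p x" by auto
    then show "r *s a \<in> p ` C" using vec.subspace_scale[OF sub] psc by (metis image_eqI)
  qed
  have kern: "x \<in> C \<Longrightarrow> p x = 0 \<Longrightarrow> \<exists>\<alpha>. x = \<alpha> *s c" for x
  proof (rule ccontr)
    assume x: "x \<in> C" "p x = 0" "\<nexists>\<alpha>. x = \<alpha> *s c"
    then have "wt c \<le> CARD('a) * wt (p x)" using K by blast
    also have "wt (p x) = 0" using x(2) by (simp add: wt_def)
    finally show False using wpos by simp
  qed
  have fib: "card {x\<in>C. p x = y} = CARD('a)" if "y \<in> p ` C" for y
  proof -
    from that obtain x0 where x0: "x0 \<in> C" "p x0 = y" by blast
    have "{x\<in>C. p x = y} = (\<lambda>\<alpha>. x0 + \<alpha> *s c) ` UNIV"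
    proof (intro equalityI subsetI)
      fix x assume "x \<in> {x\<in>C. p x = y}"
      then have "x - x0 \<in> C" "p (x - x0) = 0" using x0 vec.subspace_diff[OF sub] pdiff by auto
      then obtain \<alpha> where "x - x0 = \<alpha> *s c" using kern by blast
      then have "x = x0 + \<alpha> *s c" by (simp add: algebra_simps)
      then show "x \<in> (\<lambda>\<alpha>. x0 + \<alpha> *s c) ` UNIV" by blast
    next
      fix x assume "x \<in> (\<lambda>\<alpha>. x0 + \<alpha> *s c) ` UNIV"
      then obtain \<alpha> where "x = x0 + \<alpha> *s c" by auto
      then show "x \<in> {x\<in>C. p x = y}"
        using x0 vec.subspace_add[OF sub] vec.subspace_scale[OF sub c(1)] padd psc pc by auto
    qed
    moreover have "inj (\<lambda>\<alpha>. x0 + \<alpha> *s c)" using c(2) by (auto intro!: injI)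
    ultimately show ?thesis by (simp add: card_image)
  qed
  have CU: "C = (\<Union>y\<in>p ` C. {x\<in>C. p x = y})" by auto
  have "card (\<Union>y\<in>p ` C. {x\<in>C. p x = y}) = (\<Sum>y\<in>p ` C. card {x\<in>C. p x = y})"
    by (rule card_UN_disjoint) auto
  then have "card C = (\<Sum>y\<in>p ` C. card {x\<in>C. p x = y})" using CU by simp
  also have "\<dots> = CARD('a) * card (p ` C)" using fib by simp
  finally have cc: "card C = CARD('a) * card (p ` C)" .
  have supp': "\<forall>x\<in>p ` C. \<forall>i. i \<notin> S - T \<longrightarrow> x $ i = 0"
    using supp unfolding p_def T_def by auto
  have wts': "\<forall>x\<in>p ` C. x \<noteq> 0 \<longrightarrow> cdiv d CARD('a) \<le> wt x"
  proof (intro ballI impI)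
    fix y assume "y \<in> p ` C" "y \<noteq> 0"
    then obtain x where x: "x \<in> C" "y = p x" by blast
    have "x \<noteq> \<alpha> *s c" for \<alpha>
    proof
      assume "x = \<alpha> *s c"
      then have "y = \<alpha> *s p c" using x(2) psc by simp
      then show False using pc \<open>y \<noteq> 0\<close> by simp
    qed
    then have "wt c \<le> CARD('a) * wt y" using K x(1) unfolding x(2) by blast
    then have "d \<le> CARD('a) * wt y" using dT wc by linarith
    then show "cdiv d CARD('a) \<le> wt y" by (intro cdiv_le) simp_all
  qed
  have "T \<subseteq> S \<and> d \<le> card T \<and> vec.subspace (p ` C) \<and> card C = CARD('a) * card (p ` C) \<and>
      (\<forall>x\<in>p ` C. \<forall>i. i \<notin> S - T \<longrightarrow> x $ i = 0) \<and> (\<forall>x\<in>p ` C. x \<noteq> 0 \<longrightarrow> cdiv d CARD('a) \<le> wt x)"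
    using TS dT sub' cc supp' wts' by (intro conjI)
  then show ?thesis by (intro exI[where x=T] exI[where x="p ` C"])
qed

lemma card_field_gt1: "CARD('a::{finite,field}) > 1"
proof -
  have "card {0::'a, 1} \<le> CARD('a)" by (rule card_mono) auto
  then show ?thesis by simp
qed

lemma griesmer_aux:
  fixes C :: "('a::{finite,field} ^ 'm) set"
  shows "vec.subspace C \<Longrightarrow> card C = CARD('a) ^ Suc k \<Longrightarrow>
    (\<forall>x\<in>C. \<forall>i. i \<notin> S \<longrightarrow> x $ i = 0) \<Longrightarrow> (\<forall>x\<in>C. x \<noteq> 0 \<longrightarrow> d \<le> wt x) \<Longrightarrow>
    (\<Sum>i<Suc k. cdiv d (CARD('a) ^ i)) \<le> card S"
proof (induction k arbitrary: C S d)
  case (0 C S d)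
  have gt: "card C > 1" using 0(2) card_field_gt1 by simp
  obtain T and C' :: "('a ^ 'm) set" where "T \<subseteq> S" "d \<le> card T"
    using griesmer_step[OF 0(1) gt 0(3) 0(4)] by (elim exE conjE) (rule that; assumption)
  then have "d \<le> card S" by (meson card_mono finite le_trans)
  then show ?case by simp
next
  case (Suc k C S d)
  have q1: "CARD('a) > 1" by (rule card_field_gt1)
  then have gt: "card C > 1" using Suc(3) one_less_power[OF q1, of "Suc (Suc k)"] by presburger
  obtain T and C' :: "('a ^ 'm) set" where st: "T \<subseteq> S" "d \<le> card T" "vec.subspace C'"
      "card C = CARD('a) * card C'" "\<forall>x\<in>C'. \<forall>i. i \<notin> S - T \<longrightarrow> x $ i = 0"
      "\<forall>x\<in>C'. x \<noteq> 0 \<longrightarrow> cdiv d CARD('a) \<le> wt x"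
    using griesmer_step[OF Suc(2) gt Suc(4) Suc(5)] by (elim exE conjE) (rule that; assumption)
  have "card C' = CARD('a) ^ Suc k" using st(4) Suc(3) q1 by simp
  from Suc.IH[OF st(3) this st(5) st(6)]
  have IH: "(\<Sum>i<Suc k. cdiv (cdiv d CARD('a)) (CARD('a) ^ i)) \<le> card (S - T)" .
  have "(\<Sum>i<Suc (Suc k). cdiv d (CARD('a) ^ i)) = d + (\<Sum>i<Suc k. cdiv d (CARD('a) ^ Suc i))"
    by (subst sum.lessThan_Suc_shift) simp
  also have "(\<Sum>i<Suc k. cdiv d (CARD('a) ^ Suc i)) = (\<Sum>i<Suc k. cdiv (cdiv d CARD('a)) (CARD('a) ^ i))"
    using q1 by (simp add: cdiv_cdiv)
  also have "d + \<dots> \<le> card T + card (S - T)" using IH st(2) by simp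
  also have "\<dots> = card S" using st(1) by (metis card_Diff_subset finite le_add_diff_inverse card_mono)
  finally show ?case .
qed


definition dotx :: "'a::comm_ring_1 ^ 'n \<Rightarrow> 'a ^ 'n \<Rightarrow> 'a" where
  "dotx x v = (\<Sum>i\<in>UNIV. v $ i * x $ i)"

lemma dotx_add: "dotx x (a + b) = dotx x a + dotx x b"
  unfolding dotx_def by (simp add: distrib_right sum.distrib)
lemma dotx_diff: "dotx x (a - b) = dotx x a - dotx x b"
  unfolding dotx_def by (simp add: left_diff_distrib sum_subtractf)
lemma dotx_scale: "dotx x (c *s a) = c * dotx x a"
  unfolding dotx_def by (simp add: sum_distrib_left mult.assoc)
lemma dotx_0: "dotx x 0 = 0" unfolding dotx_def by simp

lemma fiber_card:
  fixes V :: "('a::{finite,field} ^ 'n) set"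
  assumes sub: "vec.subspace V" and e: "e \<in> V" "dotx x e = 1"
  shows "card V = CARD('a) * card {v\<in>V. dotx x v = 0}"
proof -
  let ?H = "{v\<in>V. dotx x v = 0}"
  have "bij_betw (\<lambda>v. (dotx x v, v - dotx x v *s e)) V (UNIV \<times> ?H)"
  proof (rule bij_betwI[where g="\<lambda>(t, w). w + t *s e"])
    show "(\<lambda>v. (dotx x v, v - dotx x v *s e)) \<in> V \<rightarrow> UNIV \<times> ?H"
      using sub e by (auto simp: dotx_diff dotx_scale vec.subspace_diff vec.subspace_scale)
    show "(\<lambda>(t, w). w + t *s e) \<in> UNIV \<times> ?H \<rightarrow> V"
      using sub e by (auto simp: vec.subspace_add vec.subspace_scale)
    show "(case (dotx x v, v - dotx x v *s e) of (t, w) \<Rightarrow> w + t *s e) = v" if "v \<in> V" for v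
      by simp
    show "(dotx x (case y of (t, w) \<Rightarrow> w + t *s e), (case y of (t, w) \<Rightarrow> w + t *s e) - dotx x (case y of (t, w) \<Rightarrow> w + t *s e) *s e) = y"
      if "y \<in> UNIV \<times> ?H" for y
      using that e by (auto simp: dotx_add dotx_scale)
  qed
  then have "card V = card ((UNIV::'a set) \<times> ?H)" using bij_betw_same_card by blast
  also have "\<dots> = CARD('a) * card ?H" by (simp add: card_cartesian_product)
  finally show ?thesis .
qed



lemma geom_nat: "(q::nat) \<ge> 1 \<Longrightarrow> (q - 1) * (\<Sum>i<n. q ^ i) + 1 = q ^ n"
proof (induction n)
  case 0 then show ?case by simp
next
  case (Suc n)
  have "(q - 1) * (\<Sum>i<Suc n. q ^ i) + 1 = ((q - 1) * (\<Sum>i<n. q ^ i) + 1) + (q - 1) * q ^ n"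
    by (simp add: algebra_simps)
  also have "\<dots> = q ^ n + (q - 1) * q ^ n" using Suc by simp
  also have "\<dots> = q ^ Suc n" using Suc.prems by (simp add: algebra_simps)
  finally show ?case .
qed

lemma cdiv_plus_div: "(y::nat) > 0 \<Longrightarrow> x + a = m * y \<Longrightarrow> cdiv x y + a div y = m"
proof -
  assume y: "y > 0" and xa: "x + a = m * y"
  define s where "s = a div y"
  define r where "r = a mod y"
  have ar: "a = s * y + r" unfolding s_def r_def by simp
  have ry: "r < y" unfolding r_def using y by simp
  have sm: "s * y \<le> m * y" using xa ar by linarith
  then have "s \<le> m" using y by simp
  have "(x + y - 1) div y = m - s"
  proof (rule div_nat_eqI)
    have "y * (m - s) = m * y - s * y" by (simp add: algebra_simps diff_mult_distrib)
    then show "y * (m - s) \<le> x + y - 1" using xa ar ry by linarith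
    have "y * Suc (m - s) = m * y - s * y + y" using \<open>s \<le> m\<close> by (simp add: algebra_simps diff_mult_distrib)
    then show "x + y - 1 < y * Suc (m - s)" using xa ar ry sm y by linarith
  qed
  then show ?thesis unfolding cdiv_def s_def[symmetric] using \<open>s \<le> m\<close> by simp
qed


lemma arith_main:
  fixes q u h k :: nat
  assumes uq: "u \<le> q" and u2: "2 \<le> u" and h1: "1 \<le> h" and huq: "h \<le> u * q" and uk: "u < k"
    and hk: "h * q ^ (u - 1) < q ^ (k - 1)"
  shows "q ^ k - 1 - h * (q ^ u - 1) < (q - 1) * (\<Sum>i<k. cdiv (q ^ (k - 1) - h * q ^ (u - 1) + 1) (q ^ i))"
proof -
  have q2: "q \<ge> 2" using uq u2 by simp
  define a where "a = h * q ^ (u - 1) - 1"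
  define X where "X = q ^ (k - 1) - h * q ^ (u - 1) + 1"
  have hq1: "h * q ^ (u - 1) \<ge> 1" using h1 q2 by (simp add: Suc_le_eq)
  have Xa: "X + a = q ^ (k - 1)" unfolding X_def a_def using hk hq1 by simp
  have L1: "cdiv X (q ^ i) + a div q ^ i = q ^ (k - Suc i)" if "i < k" for i
  proof (rule cdiv_plus_div)
    show "q ^ i > 0" using q2 by simp
    have "q ^ (k - Suc i) * q ^ i = q ^ (k - 1)" using that by (simp flip: power_add)
    then show "X + a = q ^ (k - Suc i) * q ^ i" using Xa by simp
  qed
  define P where "P = (\<Sum>i<k. cdiv X (q ^ i))"
  define Qs where "Qs = (\<Sum>i<k. a div q ^ i)"
  define R where "R = (\<Sum>i<k. q ^ i)"
  have PQ: "P + Qs = R"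
  proof -
    have "P + Qs = (\<Sum>i<k. q ^ (k - Suc i))" unfolding P_def Qs_def sum.distrib[symmetric]
      using L1 by simp
    also have "\<dots> = R" unfolding R_def by (rule sum.nat_diff_reindex)
    finally show ?thesis .
  qed
  have gR: "(q - 1) * R + 1 = q ^ k" unfolding R_def using q2 by (intro geom_nat) simp
  define S where "S = (\<Sum>i<u. q ^ i)"
  have gS: "(q - 1) * S + 1 = q ^ u" unfolding S_def using q2 by (intro geom_nat) simp
  have low: "a div q ^ i + 1 = h * q ^ (u - Suc i)" if "i < u" for i
  proof -
    have "cdiv 1 (q ^ i) + a div q ^ i = h * q ^ (u - Suc i)"
    proof (rule cdiv_plus_div)
      show "q ^ i > 0" using q2 by simp
      have "q ^ (u - Suc i) * q ^ i = q ^ (u - 1)" using that by (simp flip: power_add)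
      then have e: "h * q ^ (u - Suc i) * q ^ i = h * q ^ (u - 1)" by (simp add: mult.assoc)
      show "1 + a = h * q ^ (u - Suc i) * q ^ i" unfolding a_def using hq1 e by linarith
    qed
    moreover have "cdiv 1 (q ^ i) = 1" unfolding cdiv_def using q2 by simp
    ultimately show ?thesis by simp
  qed
  have sumlow: "(\<Sum>i<u. a div q ^ i) + u = h * S"
  proof -
    have "(\<Sum>i<u. a div q ^ i + 1) = (\<Sum>i<u. a div q ^ i) + u" by (simp only: sum.distrib) simp
    then have "(\<Sum>i<u. a div q ^ i) + u = (\<Sum>i<u. a div q ^ i + 1)" by simp
    also have "\<dots> = (\<Sum>i<u. h * q ^ (u - Suc i))" using low by simp
    also have "\<dots> = h * (\<Sum>i<u. q ^ (u - Suc i))" by (simp add: sum_distrib_left)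
    also have "(\<Sum>i<u. q ^ (u - Suc i)) = S" unfolding S_def by (rule sum.nat_diff_reindex)
    finally show ?thesis .
  qed
  have aum1: "a div q ^ (u - 1) = h - 1" using low[of "u - 1"] u2 by simp
  have divj: "a div q ^ i = (h - 1) div q ^ (i - (u - 1))" if "i \<ge> u - 1" for i
  proof -
    have "q ^ i = q ^ (u - 1) * q ^ (i - (u - 1))" using that by (simp flip: power_add)
    then show ?thesis using aum1 by (simp add: div_mult2_eq)
  qed
  have au: "a div q ^ u \<le> u - 1"
  proof -
    have "a div q ^ u = (h - 1) div q" using divj[of u] u2 by simp
    also have "(h - 1) div q < u"
    proof -
      have "h - 1 < u * q" using huq h1 by linarith
      then show ?thesis using q2 by (simp add: div_less_iff_less_mult)
    qed
    finally show ?thesis by simp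
  qed
  have ahigh: "a div q ^ i = 0" if "u < i" for i
  proof -
    have "a div q ^ i = (h - 1) div q ^ (i - (u - 1))" using divj that by simp
    also have "\<dots> \<le> (h - 1) div q ^ 2"
      by (rule div_le_mono2) (use q2 that u2 in \<open>simp_all add: power_increasing\<close>)
    also have "(h - 1) div q ^ 2 = 0"
    proof -
      have "u * q \<le> q * q" using uq by (rule mult_right_mono) simp
      then have "h - 1 < q * q" using huq h1 by linarith
      then have "h - 1 < q ^ 2" by (simp add: power2_eq_square)
      then show ?thesis by simp
    qed
    finally show ?thesis by simp
  qed
  have "Qs = (\<Sum>i<Suc u. a div q ^ i)" unfolding Qs_def
    by (rule sum.mono_neutral_right) (use uk ahigh in auto)
  also have "\<dots> = (\<Sum>i<u. a div q ^ i) + a div q ^ u" by simp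
  finally have "Qs + 1 \<le> h * S" using sumlow au u2 by linarith
  then have B: "(q - 1) * Qs + (q - 1) \<le> h * (q ^ u - 1)"
  proof -
    assume "Qs + 1 \<le> h * S"
    then have "(q - 1) * (Qs + 1) \<le> (q - 1) * (h * S)" by (rule mult_le_mono2)
    also have "(q - 1) * (h * S) = h * ((q - 1) * S)" by (simp add: algebra_simps)
    also have "(q - 1) * S = q ^ u - 1" using gS by linarith
    finally show ?thesis by (simp only: add_mult_distrib2 mult_1_right)
  qed
  have A: "(q - 1) * P + (q - 1) * Qs + 1 = q ^ k" using gR PQ by (simp flip: add_mult_distrib2)
  have P1: "P \<ge> 1"
  proof -
    have "P \<ge> cdiv X (q ^ 0)" unfolding P_def using uk
      by (intro member_le_sum) auto
    then show ?thesis unfolding X_def by simp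
  qed
  then have "(q - 1) * P \<ge> 1" using q2 by simp
  then have "q ^ k - 1 - h * (q ^ u - 1) < (q - 1) * P" using A B q2 by linarith
  then show ?thesis unfolding P_def X_def .
qed



lemma phi_card:
  fixes G :: "'a::{finite,field} ^ 'm ^ 'n" and Us :: "nat \<Rightarrow> ('a ^ 'n) set" and h :: nat
    and P :: "'a ^ 'n \<Rightarrow> bool"
  assumes Us_sub: "\<And>i. i \<in> {1..h} \<Longrightarrow> vec.subspace (Us i)"
    and cols: "\<And>j. column j G \<in> {v. v \<noteq> 0 \<and> (\<forall>i\<in>{1..h}. v \<notin> Us i)}"
    and reps: "\<And>v. v \<in> {v. v \<noteq> 0 \<and> (\<forall>i\<in>{1..h}. v \<notin> Us i)} \<Longrightarrow>
                 \<exists>!j. \<exists>c::'a. c \<noteq> 0 \<and> column j G = c *s v"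
    and Pinv: "\<And>c v. c \<noteq> 0 \<Longrightarrow> P (c *s v) = P v"
  shows "card {j. P (column j G)} * (CARD('a) - 1) = card {v. (v \<noteq> 0 \<and> (\<forall>i\<in>{1..h}. v \<notin> Us i)) \<and> P v}"
proof -
  let ?U = "{v. v \<noteq> 0 \<and> (\<forall>i\<in>{1..h}. v \<notin> Us i)}"
  define \<Phi> where "\<Phi> = (\<lambda>(j, c). c *s column j G)"
  have scaleU: "c *s v \<in> ?U" if "v \<in> ?U" "c \<noteq> 0" for c v
  proof -
    have "c *s v \<noteq> 0" using that by simp
    moreover have "c *s v \<notin> Us i" if i: "i \<in> {1..h}" for i
    proof
      assume "c *s v \<in> Us i"
      then have "inverse c *s (c *s v) \<in> Us i" using Us_sub[OF i] vec.subspace_scale by blast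
      then have "v \<in> Us i" using \<open>c \<noteq> 0\<close> by simp
      then show False using \<open>v \<in> ?U\<close> i by blast
    qed
    ultimately show ?thesis by blast
  qed
  have "bij_betw \<Phi> ({j. P (column j G)} \<times> (UNIV - {0})) {v \<in> ?U. P v}"
  proof (rule bij_betw_imageI)
    show "inj_on \<Phi> ({j. P (column j G)} \<times> (UNIV - {0}))"
    proof (rule inj_onI)
      fix a b assume a: "a \<in> {j. P (column j G)} \<times> (UNIV - {0})" and b: "b \<in> {j. P (column j G)} \<times> (UNIV - {0})"
        and e: "\<Phi> a = \<Phi> b"
      obtain j c where jc: "a = (j, c)" by (cases a)
      obtain j' c' where jc': "b = (j', c')" by (cases b)
      have c0: "c \<noteq> 0" "c' \<noteq> 0" using a b jc jc' by auto
      have e': "c *s column j G = c' *s column j' G" using e jc jc' by (simp add: \<Phi>_def)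
      have "column j' G = inverse c' *s (c' *s column j' G)" using c0 by simp
      also have "\<dots> = inverse c' *s (c *s column j G)" using e' by simp
      also have "\<dots> = (inverse c' * c) *s column j G" by simp
      finally have cj': "column j' G = (inverse c' * c) *s column j G" .
      have u1: "\<exists>!j''. \<exists>d::'a. d \<noteq> 0 \<and> column j'' G = d *s column j G" by (rule reps[OF cols])
      have "j' = j"
        using u1 cj' c0 by (metis (no_types, lifting) inverse_nonzero_iff_nonzero mult_eq_0_iff vector_smult_lid zero_neq_one)
      moreover have "column j G \<noteq> 0" using cols by simp
      ultimately have "c = c'" using e' by simp
      then show "a = b" using jc jc' \<open>j' = j\<close> by simp
    qed
    show "\<Phi> ` ({j. P (column j G)} \<times> (UNIV - {0})) = {v \<in> ?U. P v}"
    proof (intro equalityI subsetI)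
      fix v assume "v \<in> \<Phi> ` ({j. P (column j G)} \<times> (UNIV - {0}))"
      then obtain j c where v: "v = c *s column j G" "c \<noteq> 0" "P (column j G)" by (auto simp: \<Phi>_def)
      have "v \<in> ?U" using scaleU[OF cols v(2)] v(1) by simp
      moreover have "P v" using Pinv v by simp
      ultimately show "v \<in> {v \<in> ?U. P v}" by blast
    next
      fix v assume v: "v \<in> {v \<in> ?U. P v}"
      then have "v \<in> ?U" by blast
      from ex1_implies_ex[OF reps[OF this]]
      obtain j c where jc: "c \<noteq> 0" "column j G = c *s v" by blast
      then have "v = inverse c *s column j G" by simp
      moreover have "P (column j G)" using jc v Pinv by simp
      ultimately show "v \<in> \<Phi> ` ({j. P (column j G)} \<times> (UNIV - {0}))"
        using jc unfolding \<Phi>_def by (auto intro!: image_eqI[where x="(j, inverse c)"])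
    qed
  qed
  then have "card ({j. P (column j G)} \<times> (UNIV - {0::'a})) = card {v \<in> ?U. P v}"
    by (rule bij_betw_same_card)
  then show ?thesis by (simp add: card_cartesian_product card_Diff_singleton)
qed



lemma dotx_axis: "dotx x (axis i0 c) = c * x $ i0"
proof -
  have "(\<lambda>i. (axis i0 c) $ i * x $ i) = (\<lambda>i. if i = i0 then c * x $ i else 0)"
    by (auto simp: axis_def)
  then have "(\<Sum>i\<in>UNIV. (axis i0 c) $ i * x $ i) = (\<Sum>i\<in>UNIV. if i = i0 then c * x $ i else 0)"
    by (rule arg_cong)
  then show ?thesis unfolding dotx_def by simp
qed

lemma vm_dotx: "(x v* G) $ j = dotx x (column j G)"
  unfolding dotx_def vector_matrix_mult_def column_def by (simp add: mult.commute)

lemma vm_diff: "(x - y) v* (G :: 'a::comm_ring_1 ^ 'm ^ 'n) = x v* G - y v* G"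
  by (simp add: vec_eq_iff vector_matrix_mult_def left_diff_distrib sum_subtractf)
lemma vm_add: "(x + y) v* (G :: 'a::comm_ring_1 ^ 'm ^ 'n) = x v* G + y v* G"
  by (simp add: vec_eq_iff vector_matrix_mult_def distrib_right sum.distrib)
lemma vm_scale: "(c *s x) v* (G :: 'a::comm_ring_1 ^ 'm ^ 'n) = c *s (x v* G)"
  by (simp add: vec_eq_iff vector_matrix_mult_def sum_distrib_left mult.assoc)

lemma fin_hd:
  fixes P :: "'a::finite ^ 'm \<Rightarrow> 'a ^ 'm \<Rightarrow> bool"
  shows "finite {hamming_dist x y | x y. P x y}"
proof (rule finite_subset)
  show "{hamming_dist x y | x y. P x y} \<subseteq> (\<lambda>(x, y). hamming_dist x y) ` (UNIV :: (('a ^ 'm) \<times> ('a ^ 'm)) set)"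
    by auto
qed simp

lemma hd_wt: "hamming_dist a b = wt (a - b)" for a b :: "'a::ab_group_add ^ 'm"
  unfolding hamming_dist_def wt_def by simp

theorem corollary2p1:
  fixes Us :: "nat \<Rightarrow> ('a::{finite,field} ^ 'n) set"
    and G :: "'a ^ 'm ^ 'n"
    and k u h :: nat
  assumes k: "CARD('n) = k" "k \<ge> 3"
    and u: "CARD('a) \<ge> u" "u \<ge> 2"
    and h: "h \<ge> 1"
    and Us_sub: "\<And>i. i \<in> {1..h} \<Longrightarrow> vec.subspace (Us i) \<and> vec.dim (Us i) = u"
    and Us_disj: "\<And>i j. i \<in> {1..h} \<Longrightarrow> j \<in> {1..h} \<Longrightarrow> i \<noteq> j \<Longrightarrow> Us i \<inter> Us j = {0}"
    and cond: "CARD('a) ^ k - CARD('a) ^ (k - 1) > h * (CARD('a) ^ u - 1)"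
    and cols: "\<And>j. column j G \<in> {v. v \<noteq> 0 \<and> (\<forall>i\<in>{1..h}. v \<notin> Us i)}"
    and reps: "\<And>v. v \<in> {v. v \<noteq> 0 \<and> (\<forall>i\<in>{1..h}. v \<notin> Us i)} \<Longrightarrow>
                 \<exists>!j. \<exists>c::'a. c \<noteq> 0 \<and> column j G = c *s v"
    and hq: "h \<le> u * CARD('a)"
  shows "distance_optimal (gen_code G)"
proof -
  define q where "q = CARD('a)"
  define n where "n = CARD('m)"
  define U where "U = {v::'a^'n. v \<noteq> 0 \<and> (\<forall>i\<in>{1..h}. v \<notin> Us i)}"
  have q2: "q \<ge> 2" using card_field_gt1[where 'a='a] unfolding q_def by simp
  have cardUs: "card (Us i) = q ^ u" if "i \<in> {1..h}" for i
    using card_subspace[of "Us i"] Us_sub[OF that] unfolding q_def by simp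
  have subU: "vec.subspace (Us i)" if "i \<in> {1..h}" for i using Us_sub[OF that] by simp
  have nU: "n * (q - 1) = card U"
    using phi_card[of h Us G "\<lambda>_. True", OF subU cols reps] unfolding n_def q_def U_def by simp
  have cardU: "card U = q ^ k - 1 - h * (q ^ u - 1)"
  proof -
    have Ueq: "U = (UNIV - {0}) - (\<Union>i\<in>{1..h}. Us i - {0})" unfolding U_def by auto
    have "card (\<Union>i\<in>{1..h}. Us i - {0}) = (\<Sum>i\<in>{1..h}. card (Us i - {0}))"
    proof (rule card_UN_disjoint)
      show "\<forall>i\<in>{1..h}. \<forall>j\<in>{1..h}. i \<noteq> j \<longrightarrow> (Us i - {0}) \<inter> (Us j - {0}) = {}"
        using Us_disj by blast
    qed auto
    also have "\<dots> = (\<Sum>i\<in>{1..h}. q ^ u - 1)"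
      by (rule sum.cong[OF refl]) (simp add: card_Diff_singleton cardUs vec.subspace_0[OF subU])
    also have "\<dots> = h * (q ^ u - 1)" by simp
    finally have cu: "card (\<Union>i\<in>{1..h}. Us i - {0}) = h * (q ^ u - 1)" .
    have cv: "card (UNIV - {0::'a^'n}) = q ^ k - 1" using k(1) by (simp add: card_Diff_singleton q_def)
    have "card U = card (UNIV - {0::'a^'n}) - card (\<Union>i\<in>{1..h}. Us i - {0})"
      unfolding Ueq by (rule card_Diff_subset) auto
    then show ?thesis using cu cv by simp
  qed
  define D where "D = q ^ (k - 1) - h * q ^ (u - 1)"
  have pw: "q ^ j - q ^ (j - 1) = (q - 1) * q ^ (j - 1)" if "j \<ge> 1" for j
  proof -
    have "q ^ j = q * q ^ (j - 1)" using that by (metis Suc_diff_le diff_Suc_1 power_Suc)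
    then show ?thesis by (simp add: diff_mult_distrib)
  qed
  have wtD: "wt (x v* G) \<ge> D" if x0: "x \<noteq> 0" for x
  proof -
    define Nz where "Nz = {v::'a^'n. dotx x v \<noteq> 0}"
    have "card {j. dotx x (column j G) \<noteq> 0} * (CARD('a) - 1) = card {v. (v \<noteq> 0 \<and> (\<forall>i\<in>{1..h}. v \<notin> Us i)) \<and> dotx x v \<noteq> 0}"
      by (rule phi_card[of h Us G "\<lambda>v. dotx x v \<noteq> 0", OF subU cols reps]) (simp_all add: dotx_scale)
    moreover have "wt (x v* G) = card {j. dotx x (column j G) \<noteq> 0}" unfolding wt_def vm_dotx ..
    moreover have "{v. (v \<noteq> 0 \<and> (\<forall>i\<in>{1..h}. v \<notin> Us i)) \<and> dotx x v \<noteq> 0} = Nz - (\<Union>i\<in>{1..h}. Us i \<inter> Nz)"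
      unfolding Nz_def by (auto simp: dotx_0)
    ultimately have wq: "wt (x v* G) * (q - 1) = card (Nz - (\<Union>i\<in>{1..h}. Us i \<inter> Nz))" unfolding q_def by simp
    obtain i0 where i0: "x $ i0 \<noteq> 0" using x0 by (metis vec_eq_iff zero_index)
    define e where "e = axis i0 (inverse (x $ i0))"
    have e1: "dotx x e = 1" unfolding e_def dotx_axis using i0 by simp
    have "card (UNIV :: ('a^'n) set) = CARD('a) * card {v\<in>UNIV. dotx x v = 0}"
      by (rule fiber_card[OF vec.subspace_UNIV _ e1]) simp
    then have "q ^ k = q * card {v. dotx x v = 0}" using k(1) unfolding q_def by simp
    moreover have "q ^ k = q * q ^ (k - 1)" using k(2) by (metis Suc_diff_le diff_Suc_1 le_trans one_le_numeral power_Suc)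
    ultimately have cH: "card {v::'a^'n. dotx x v = 0} = q ^ (k - 1)" using q2 by simp
    have "Nz = UNIV - {v. dotx x v = 0}" unfolding Nz_def by auto
    then have cNz: "card Nz = q ^ k - q ^ (k - 1)"
      using cH k(1) by (simp add: card_Diff_subset q_def)
    have cUi: "card (Us i \<inter> Nz) \<le> q ^ u - q ^ (u - 1)" if i: "i \<in> {1..h}" for i
    proof (cases "Us i \<inter> Nz = {}")
      case True then show ?thesis by simp
    next
      case False
      then obtain v where v: "v \<in> Us i" "dotx x v \<noteq> 0" unfolding Nz_def by auto
      define e' where "e' = inverse (dotx x v) *s v"
      have "e' \<in> Us i" unfolding e'_def using subU[OF i] v(1) by (simp add: vec.subspace_scale)
      moreover have "dotx x e' = 1" unfolding e'_def using v(2) by (simp add: dotx_scale)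
      ultimately have "card (Us i) = CARD('a) * card {w\<in>Us i. dotx x w = 0}"
        by (rule fiber_card[OF subU[OF i]])
      then have "q ^ u = q * card {w\<in>Us i. dotx x w = 0}" using cardUs[OF i] unfolding q_def by simp
      moreover have "q ^ u = q * q ^ (u - 1)" using u(2) by (metis Suc_diff_le diff_Suc_1 le_trans one_le_numeral power_Suc)
      ultimately have c0: "card {w\<in>Us i. dotx x w = 0} = q ^ (u - 1)" using q2 by simp
      have "Us i \<inter> Nz = Us i - {w\<in>Us i. dotx x w = 0}" unfolding Nz_def by auto
      then have "card (Us i \<inter> Nz) = card (Us i) - card {w\<in>Us i. dotx x w = 0}"
        by (simp add: card_Diff_subset)
      then show ?thesis using c0 cardUs[OF i] by simp
    qed
    have "card (\<Union>i\<in>{1..h}. Us i \<inter> Nz) \<le> (\<Sum>i\<in>{1..h}. card (Us i \<inter> Nz))"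
      by (rule card_UN_le) simp
    also have "\<dots> \<le> (\<Sum>i\<in>{1..h}. q ^ u - q ^ (u - 1))" by (rule sum_mono) (rule cUi)
    also have "\<dots> = h * (q ^ u - q ^ (u - 1))" by simp
    finally have cUn: "card (\<Union>i\<in>{1..h}. Us i \<inter> Nz) \<le> h * (q ^ u - q ^ (u - 1))" .
    have "card Nz - card (\<Union>i\<in>{1..h}. Us i \<inter> Nz) \<le> card (Nz - (\<Union>i\<in>{1..h}. Us i \<inter> Nz))"
      by (rule diff_card_le_card_Diff) simp
    then have "q ^ k - q ^ (k - 1) - h * (q ^ u - q ^ (u - 1)) \<le> wt (x v* G) * (q - 1)"
      using wq cNz cUn by linarith
    also have "q ^ k - q ^ (k - 1) - h * (q ^ u - q ^ (u - 1)) = (q - 1) * D"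
      unfolding D_def using pw[of k] pw[of u] k(2) u(2) by (simp add: diff_mult_distrib2 algebra_simps)
    finally have "(q - 1) * D \<le> (q - 1) * wt (x v* G)" by (simp add: mult.commute)
    then show ?thesis using q2 by simp
  qed
  have cu1: "h * (q ^ u - q ^ (u - 1)) \<le> h * (q ^ u - 1)"
  proof -
    have "1 \<le> q ^ (u - 1)" using q2 by simp
    then have "q ^ u - q ^ (u - 1) \<le> q ^ u - 1" by (rule diff_le_mono2)
    then show ?thesis by (rule mult_le_mono2)
  qed
  have hk: "h * q ^ (u - 1) < q ^ (k - 1)"
  proof -
    have "(q - 1) * (h * q ^ (u - 1)) = h * (q ^ u - q ^ (u - 1))" using pw[of u] u(2) by simp
    also have "\<dots> \<le> h * (q ^ u - 1)" by (rule cu1)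
    also have "\<dots> < q ^ k - q ^ (k - 1)" using cond unfolding q_def .
    also have "\<dots> = (q - 1) * q ^ (k - 1)" using pw[of k] k(2) by simp
    finally have "(q - 1) * (h * q ^ (u - 1)) < (q - 1) * q ^ (k - 1)" .
    then show ?thesis by simp
  qed
  have D1: "D \<ge> 1" unfolding D_def using hk by simp
  have uk: "u < k"
  proof (rule ccontr)
    assume "\<not> u < k"
    then have "q ^ k \<le> q ^ u" using q2 by (simp add: power_increasing)
    moreover have "q ^ u \<ge> 1" using q2 by simp
    ultimately have "q ^ k - q ^ (k - 1) \<le> h * (q ^ u - 1)" using h
      by (metis diff_le_mono diff_le_mono2 le_trans mult_1 mult_le_mono1 one_le_power q2 le_trans[OF one_le_numeral])
    then show False using cond unfolding q_def by simp
  qed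
  define C where "C = gen_code G"
  have Crange: "C = range (\<lambda>x. x v* G)" unfolding C_def gen_code_def by auto
  have injG: "inj (\<lambda>x. x v* G)"
  proof (rule injI)
    fix x y assume "x v* G = y v* G"
    then have "(x - y) v* G = 0" by (simp add: vm_diff)
    then have "wt ((x - y) v* G) = 0" by (simp add: wt_def)
    then show "x = y" using wtD[of "x - y"] D1 by (cases "x = y") auto
  qed
  have subC: "vec.subspace C" unfolding Crange vec.subspace_def
  proof (intro conjI ballI allI)
    show "0 \<in> range (\<lambda>x. x v* G)" by (metis rangeI vector_matrix_mult_0)
    show "a + b \<in> range (\<lambda>x. x v* G)" if "a \<in> range (\<lambda>x. x v* G)" "b \<in> range (\<lambda>x. x v* G)" for a b
      using that by (auto simp flip: vm_add)
    show "c *s a \<in> range (\<lambda>x. x v* G)" if "a \<in> range (\<lambda>x. x v* G)" for c a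
      using that by (auto simp flip: vm_scale)
  qed
  have cardC: "card C = q ^ k" unfolding Crange using injG k(1) by (simp add: card_image q_def)
  have dimC: "vec.dim C = k"
  proof -
    have "q ^ vec.dim C = q ^ k" using card_subspace[OF subC] cardC unfolding q_def by simp
    then show ?thesis using q2 by (simp add: power_inject_exp)
  qed
  have mdC: "min_dist C \<ge> D"
  proof -
    let ?M = "{hamming_dist a b | a b. a \<in> C \<and> b \<in> C \<and> a \<noteq> b}"
    obtain i0 :: 'n where True by simp
    have ax: "axis i0 (1::'a) \<noteq> 0" by (simp add: axis_eq_0_iff)
    have neq: "axis i0 1 v* G \<noteq> 0 v* G"
    proof
      assume "axis i0 1 v* G = 0 v* G"
      then have "axis i0 (1::'a) = 0" by (rule injD[OF injG])
      then show False using ax by simp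
    qed
    have inC: "axis i0 1 v* G \<in> C" "0 v* G \<in> C" unfolding Crange by (rule rangeI)+
    have "hamming_dist (axis i0 1 v* G) (0 v* G) \<in> ?M"
      using neq inC by blast
    then have ne: "?M \<noteq> {}" by blast
    have allM: "\<forall>m\<in>?M. D \<le> m"
    proof
      fix m assume "m \<in> ?M"
      then obtain x y where "m = hamming_dist (x v* G) (y v* G)" "x v* G \<noteq> y v* G"
        unfolding Crange by auto
      then show "D \<le> m" using wtD[of "x - y"] by (auto simp: hd_wt vm_diff)
    qed
    show ?thesis unfolding min_dist_def using Min_ge_iff[OF fin_hd ne] allM by blast
  qed
  show ?thesis
    unfolding distance_optimal_def C_def[symmetric] dimC
  proof
    assume "\<exists>C' :: ('a ^ 'm) set. linear_code k (min_dist C + 1) C'"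
    then obtain C' :: "('a ^ 'm) set" where C': "vec.subspace C'" "vec.dim C' = k" "min_dist C' = min_dist C + 1"
      unfolding linear_code_def by blast
    have cC': "card C' = q ^ Suc (k - 1)" using card_subspace[OF C'(1)] C'(2) k(2) unfolding q_def by simp
    have wC': "\<forall>x\<in>C'. x \<noteq> 0 \<longrightarrow> min_dist C + 1 \<le> wt x"
    proof (intro ballI impI)
      fix x assume "x \<in> C'" "x \<noteq> 0"
      then have "hamming_dist x 0 \<in> {hamming_dist a b | a b. a \<in> C' \<and> b \<in> C' \<and> a \<noteq> b}"
        using vec.subspace_0[OF C'(1)] by blast
      then have "min_dist C' \<le> hamming_dist x 0" unfolding min_dist_def using fin_hd by (intro Min_le) auto
      then show "min_dist C + 1 \<le> wt x" using C'(3) by (simp add: hd_wt)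
    qed
    have "(\<Sum>i<Suc (k - 1). cdiv (min_dist C + 1) (CARD('a) ^ i)) \<le> card (UNIV :: 'm set)"
      by (rule griesmer_aux[OF C'(1) cC'[unfolded q_def]]) (use wC' in auto)
    then have g: "(\<Sum>i<k. cdiv (min_dist C + 1) (q ^ i)) \<le> n" using k(2) unfolding q_def n_def by simp
    have "(\<Sum>i<k. cdiv (D + 1) (q ^ i)) \<le> (\<Sum>i<k. cdiv (min_dist C + 1) (q ^ i))"
      by (rule sum_mono) (use mdC in \<open>simp add: cdiv_def div_le_mono\<close>)
    with g have "(\<Sum>i<k. cdiv (D + 1) (q ^ i)) \<le> n" by linarith
    then have "(q - 1) * (\<Sum>i<k. cdiv (D + 1) (q ^ i)) \<le> (q - 1) * n" by simp
    also have "\<dots> = q ^ k - 1 - h * (q ^ u - 1)" using nU cardU by (simp add: mult.commute)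
    finally have le: "(q - 1) * (\<Sum>i<k. cdiv (D + 1) (q ^ i)) \<le> q ^ k - 1 - h * (q ^ u - 1)" .
    have am: "q ^ k - 1 - h * (q ^ u - 1) < (q - 1) * (\<Sum>i<k. cdiv (D + 1) (q ^ i))"
      unfolding D_def by (rule arith_main[OF u(1)[folded q_def] u(2) h hq[folded q_def] uk hk])
    from le am show False by linarith
  qed
qed

end
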